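(* Let $\pi\colon (X,T)\to(Y,S)$ be a factor map between systems, with $(Y,S)$ minimal, and assume that for some $y_0\in Y$ the fiber $\pi^{-1}(\{y_0\})$ is proximal. Then $\pi$ is a proximal extension, i.e. every fiber $\pi^{-1}(\{y\})$, $y\in Y$, is proximal.
   Context: A system is a compact metric space with a homeomorphism. A factor map is a continuous surjection $\pi$ with $\pi\circ T=S\circ\pi$. Points $x_1,x_2\in X$ are proximal if $\inf_{n\in\mathbb N} d(T^nx_1,T^nx_2)=0$; a set $F\subset X$ is proximal if every pair of its points is proximal. $\pi$ is a proximal extension if every fiber $\pi^{-1}(\{y\})$ is proximal. *)

theory Defs
  imports "HOL-Analysis.Analysis"
begin

definition dyn_system :: "'a::metric_space set \<Rightarrow> ('a \<Rightarrow> 'a) \<Rightarrow> bool" where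
  "dyn_system X T \<longleftrightarrow> compact X \<and> (\<exists>Tinv. homeomorphism X X T Tinv)"

definition minimal_system :: "'a::metric_space set \<Rightarrow> ('a \<Rightarrow> 'a) \<Rightarrow> bool" where
  "minimal_system X T \<longleftrightarrow> dyn_system X T \<and>
     (\<forall>Z. Z \<subseteq> X \<and> closed Z \<and> Z \<noteq> {} \<and> T ` Z \<subseteq> Z \<longrightarrow> Z = X)"

definition factor_map ::
  "'a::metric_space set \<Rightarrow> ('a \<Rightarrow> 'a) \<Rightarrow> 'b::metric_space set \<Rightarrow> ('b \<Rightarrow> 'b) \<Rightarrow> ('a \<Rightarrow> 'b) \<Rightarrow> bool" where
  "factor_map X T Y S \<pi> \<longleftrightarrow> dyn_system X T \<and> dyn_system Y S \<and>
     continuous_on X \<pi> \<and> \<pi> ` X = Y \<and> (\<forall>x\<in>X. \<pi> (T x) = S (\<pi> x))"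

definition proximal_pair :: "('a::metric_space \<Rightarrow> 'a) \<Rightarrow> 'a \<Rightarrow> 'a \<Rightarrow> bool" where
  "proximal_pair T x1 x2 \<longleftrightarrow> (INF n::nat. dist ((T ^^ n) x1) ((T ^^ n) x2)) = 0"

definition proximal_set :: "('a::metric_space \<Rightarrow> 'a) \<Rightarrow> 'a set \<Rightarrow> bool" where
  "proximal_set T F \<longleftrightarrow> (\<forall>x1\<in>F. \<forall>x2\<in>F. proximal_pair T x1 x2)"

definition fiber :: "'a set \<Rightarrow> ('a \<Rightarrow> 'b) \<Rightarrow> 'b \<Rightarrow> 'a set" where
  "fiber X \<pi> y = {x \<in> X. \<pi> x = y}"

definition proximal_extension ::
  "'a::metric_space set \<Rightarrow> ('a \<Rightarrow> 'a) \<Rightarrow> 'b set \<Rightarrow> ('a \<Rightarrow> 'b) \<Rightarrow> bool" where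
  "proximal_extension X T Y \<pi> \<longleftrightarrow> (\<forall>y\<in>Y. proximal_set T (fiber X \<pi> y))"

end

theory Submission
  imports Defs
begin

lemma iter_in: assumes "T ` X \<subseteq> X" "x \<in> X" shows "(T ^^ n) x \<in> X"
  using assms by (induction n) auto

theorem mainTheorem2:
  fixes X :: "'a::metric_space set" and T :: "'a \<Rightarrow> 'a"
    and Y :: "'b::metric_space set" and S :: "'b \<Rightarrow> 'b" and \<pi> :: "'a \<Rightarrow> 'b"
  assumes "factor_map X T Y S \<pi>"
    and "minimal_system Y S"
    and "y0 \<in> Y"
    and "proximal_set T (fiber X \<pi> y0)"
  shows "proximal_extension X T Y \<pi>"
  unfolding proximal_extension_def proximal_set_def
proof (intro ballI)
  fix y x1 x2 assume y: "y \<in> Y" and x1: "x1 \<in> fiber X \<pi> y" and x2: "x2 \<in> fiber X \<pi> y"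
  have cX: "compact X" and piC: "continuous_on X \<pi>" and piX: "\<pi> ` X = Y"
    and comm: "\<forall>x\<in>X. \<pi> (T x) = S (\<pi> x)"
    using assms(1) unfolding factor_map_def dyn_system_def by auto
  obtain Tinv where hom: "homeomorphism X X T Tinv"
    using assms(1) unfolding factor_map_def dyn_system_def by auto
  have TC: "continuous_on X T" and TX: "T ` X = X" using hom unfolding homeomorphism_def by auto
  have x1X: "x1 \<in> X" and x2X: "x2 \<in> X" and px1: "\<pi> x1 = y" and px2: "\<pi> x2 = y"
    using x1 x2 unfolding fiber_def by auto
  define d where "d = (\<lambda>n::nat. dist ((T ^^ n) x1) ((T ^^ n) x2))"
  show "proximal_pair T x1 x2"
  proof (rule ccontr)
    assume np: "\<not> proximal_pair T x1 x2"
    define \<delta> where "\<delta> = (INF n. d n)"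
    have "\<delta> \<ge> 0" unfolding \<delta>_def by (rule cINF_greatest) (auto simp: d_def)
    with np have dpos: "\<delta> > 0" unfolding proximal_pair_def \<delta>_def d_def by auto
    have dge: "d n \<ge> \<delta>" for n unfolding \<delta>_def
      by (rule cINF_lower) (auto simp: bdd_below_def d_def intro!: exI[of _ 0])
    define F where "F = (\<lambda>p::'a\<times>'a. (T (fst p), T (snd p)))"
    define Orb where "Orb = range (\<lambda>n. ((T ^^ n) x1, (T ^^ n) x2))"
    define K where "K = closure Orb"
    have OrbX: "Orb \<subseteq> X \<times> X" unfolding Orb_def using iter_in[of T X] TX x1X x2X by auto
    have cXX: "compact (X \<times> X)" using cX by (simp add: compact_Times)
    have KX: "K \<subseteq> X \<times> X" unfolding K_def using OrbX cXX
      by (simp add: closure_minimal compact_imp_closed)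
    have FC: "continuous_on (X \<times> X) F" unfolding F_def
      by (intro continuous_on_Pair continuous_on_compose2[OF TC] continuous_intros) auto
    have FOrb: "F ` Orb \<subseteq> Orb" unfolding F_def Orb_def
      proof (clarsimp)
      fix n show "(T ((T ^^ n) x1), T ((T ^^ n) x2)) \<in> range (\<lambda>n. ((T ^^ n) x1, (T ^^ n) x2))"
        using rangeI[of "\<lambda>n. ((T ^^ n) x1, (T ^^ n) x2)" "Suc n"] by simp
    qed
    have FK: "F ` K \<subseteq> K" unfolding K_def
      by (rule image_closure_subset) (use FC KX FOrb K_def closure_subset[of Orb] in \<open>auto intro: continuous_on_subset\<close>)
    have Kdist: "K \<subseteq> {p. dist (fst p) (snd p) \<ge> \<delta>}" unfolding K_def
    proof (rule closure_minimal)
      show "Orb \<subseteq> {p. \<delta> \<le> dist (fst p) (snd p)}" using dge unfolding Orb_def d_def by auto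
      show "closed {p. \<delta> \<le> dist (fst p) (snd p)}"
        by (intro closed_Collect_le continuous_intros)
    qed
    define g where "g = (\<lambda>p::'a\<times>'a. dist (\<pi> (fst p)) (\<pi> (snd p)))"
    have gC: "continuous_on (X \<times> X) g" unfolding g_def
      by (intro continuous_on_dist continuous_on_compose2[OF piC] continuous_intros) auto
    have Eclosed: "closed ((X \<times> X) \<inter> g -` {0})"
      by (rule continuous_closed_preimage[OF gC]) (auto simp: cXX compact_imp_closed)
    have Orbeq: "Orb \<subseteq> (X \<times> X) \<inter> g -` {0}"
    proof
      fix p assume "p \<in> Orb"
      then obtain n where p: "p = ((T ^^ n) x1, (T ^^ n) x2)" unfolding Orb_def by auto
      have "\<pi> ((T ^^ n) x1) = \<pi> ((T ^^ n) x2)"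
      proof (induction n)
        case 0 then show ?case using px1 px2 by simp
      next
        case (Suc n)
        have "(T ^^ n) x1 \<in> X" "(T ^^ n) x2 \<in> X" using iter_in[of T X] TX x1X x2X by auto
        then show ?case using Suc comm by simp
      qed
      then show "p \<in> (X \<times> X) \<inter> g -` {0}" using \<open>p \<in> Orb\<close> OrbX p by (auto simp: g_def)
    qed
    have Keq: "K \<subseteq> (X \<times> X) \<inter> g -` {0}" unfolding K_def
      by (rule closure_minimal[OF Orbeq Eclosed])
    have Kc: "compact K" unfolding K_def
      using KX K_def cXX compact_Int_closed[of "X\<times>X" K] by (metis closed_closure inf.absorb2)
    define Z where "Z = \<pi> ` fst ` K"
    have fK: "fst ` K \<subseteq> X" using KX by auto
    have Zc: "compact Z" unfolding Z_def
      by (intro compact_continuous_image continuous_on_subset[OF piC fK] compact_continuous_image continuous_intros Kc)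
    have ZY: "Z \<subseteq> Y" unfolding Z_def using fK piX by auto
    have Zne: "Z \<noteq> {}" unfolding Z_def K_def Orb_def by auto
    have SZ: "S ` Z \<subseteq> Z"
    proof
      fix z assume "z \<in> S ` Z"
      then obtain p where p: "p \<in> K" and z: "z = S (\<pi> (fst p))" unfolding Z_def by auto
      have "fst p \<in> X" using p KX by auto
      then have "z = \<pi> (fst (F p))" using comm z by (simp add: F_def)
      moreover have "F p \<in> K" using FK p by auto
      ultimately show "z \<in> Z" unfolding Z_def by auto
    qed
    have "Z = Y" using assms(2) Zc ZY Zne SZ unfolding minimal_system_def
      by (meson compact_imp_closed)
    then obtain p where pK: "p \<in> K" and py: "\<pi> (fst p) = y0" using assms(3) unfolding Z_def by auto
    obtain u v where puv: "p = (u, v)" by force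
    have uX: "u \<in> X" and vX: "v \<in> X" and "g p = 0" using pK KX Keq puv by auto
    then have pv: "\<pi> v = y0" using py puv by (simp add: g_def)
    have "u \<in> fiber X \<pi> y0" "v \<in> fiber X \<pi> y0" using uX vX py pv puv by (auto simp: fiber_def)
    then have prox: "proximal_pair T u v" using assms(4) unfolding proximal_set_def by auto
    have itK: "((T ^^ n) u, (T ^^ n) v) \<in> K" for n
    proof (induction n)
      case 0 then show ?case using pK puv by simp
    next
      case (Suc n)
      then have "F ((T ^^ n) u, (T ^^ n) v) \<in> K" using FK by auto
      then show ?case by (simp add: F_def)
    qed
    have "(INF n::nat. dist ((T ^^ n) u) ((T ^^ n) v)) \<ge> \<delta>"
      by (rule cINF_greatest) (use itK Kdist in \<open>auto dest!: subsetD\<close>)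
    then show False using prox dpos unfolding proximal_pair_def by simp
  qed
qed

end
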